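(* Let $n$ be even and let $v_0,\dots,v_{n+1}\in\mathbb{R}^n$ be hereditarily spanning. Then $dP(v_0,\dots,v_{n+1})=0$.
   Context: For $v_1,\dots,v_n\in\mathbb{R}^n$, $\mathrm{Or}(v_1,\dots,v_n)\in\{-1,0,1\}$ is the sign of $\det(v_1,\dots,v_n)$ (zero if not a basis). Define $P:(\mathbb{R}^n)^{n+1}\to\{-1,0,1\}$ by $P(v_0,\dots,v_n)=\prod_{i=0}^n\mathrm{Or}(v_0,\dots,\widehat{v_i},\dots,v_n)$. A $k$-tuple ($k\ge n$) of vectors in $\mathbb{R}^n$ is hereditarily spanning if every subcollection of $n$ of its elements spans $\mathbb{R}^n$. The coboundary is $dP(v_0,\dots,v_{n+1})=\sum_{i=0}^{n+1}(-1)^iP(v_0,\dots,\widehat{v_i},\dots,v_{n+1})$. *)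

theory Defs
  imports "Jordan_Normal_Form.Determinant" "Jordan_Normal_Form.VS_Connect"
begin

definition omit :: "nat \<Rightarrow> 'a list \<Rightarrow> 'a list" where
  "omit i xs = take i xs @ drop (Suc i) xs"

definition Or :: "nat \<Rightarrow> real vec list \<Rightarrow> real" where
  "Or n vs = sgn (det (mat_of_cols n vs))"

definition P :: "nat \<Rightarrow> real vec list \<Rightarrow> real" where
  "P n vs = (\<Prod>i\<in>{0..n}. Or n (omit i vs))"

definition dP :: "nat \<Rightarrow> real vec list \<Rightarrow> real" where
  "dP n vs = (\<Sum>i\<in>{0..n+1}. (-1)^i * P n (omit i vs))"

definition hereditarily_spanning :: "nat \<Rightarrow> real vec list \<Rightarrow> bool" where
  "hereditarily_spanning n vs \<longleftrightarrow> n \<le> length vs \<and> set vs \<subseteq> carrier_vec n \<and>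
     (\<forall>S. S \<subseteq> {..<length vs} \<and> card S = n \<longrightarrow>
        LinearCombinations.module.span class_ring (module_vec TYPE(real) n) ((\<lambda>i. vs ! i) ` S) = carrier_vec n)"

end

theory Submission
  imports Defs
begin

definition cr :: "real \<times> real \<Rightarrow> real \<times> real \<Rightarrow> real" where
  "cr p q = fst p * snd q - snd p * fst q"

lemma cr_anti: "cr a b = - cr b a" unfolding cr_def by simp

lemma cr_plucker: "cr p b * cr a c = cr p a * cr b c + cr p c * cr a b"
  unfolding cr_def by (simp add: algebra_simps)

lemma cr_trans:
  assumes "cr p a > 0" "cr p b > 0" "cr p c > 0" "cr a b > 0" "cr b c > 0"
  shows "cr a c > 0"
proof -
  have "cr p a * cr b c > 0" using assms by (intro mult_pos_pos)
  moreover have "cr p c * cr a b > 0" using assms by (intro mult_pos_pos)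
  ultimately have "cr p b * cr a c > 0" using cr_plucker[of p b a c] by linarith
  thus ?thesis using assms(2) by (rule zero_less_mult_pos)
qed

definition scl :: "real \<Rightarrow> real \<times> real \<Rightarrow> real \<times> real" where
  "scl e v = (e * fst v, e * snd v)"

lemma cr_scl1: "cr (scl e a) b = e * cr a b" unfolding cr_def scl_def by (simp add: algebra_simps)
lemma cr_scl2: "cr a (scl e b) = e * cr a b" unfolding cr_def scl_def by (simp add: algebra_simps)
lemma cr_self: "cr a a = 0" unfolding cr_def by simp

lemma sgn_sq: "(x::real) \<noteq> 0 \<Longrightarrow> sgn x * sgn x = 1"
  by (simp add: sgn_if)

lemma comb:
  assumes "finite I" "even (card I)" "\<forall>i\<in>I. \<forall>j\<in>I. i \<noteq> j \<longrightarrow> cr (u i) (u j) \<noteq> 0"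
  shows "(\<Sum>i\<in>I. \<Prod>j\<in>I-{i}. sgn (cr (u i) (u j))) = 0"
  using assms
proof (induct "card I" arbitrary: I rule: less_induct)
  case less
  show ?case
  proof (cases "I = {}")
    case True thus ?thesis by simp
  next
    case False
    then obtain p where pI: "p \<in> I" by auto
    define J where "J = I - {p}"
    have "card I \<noteq> 1" using less(3) by auto
    moreover have "card I \<noteq> 0" using False less(2) by simp
    moreover have "card J = card I - 1" using pI less(2) unfolding J_def by (simp add: card_Diff_singleton)
    ultimately have "card J \<noteq> 0" by linarith
    hence "J \<noteq> {}" by auto
    have finJ: "finite J" using less(2) unfolding J_def by simp
    define \<epsilon> where "\<epsilon> j = sgn (cr (u p) (u j))" for j
    have sgn_eps: "\<And>k. sgn (\<epsilon> k) = \<epsilon> k" unfolding \<epsilon>_def by simp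
    define w where "w j = scl (\<epsilon> j) (u j)" for j
    have crnz: "\<And>i j. i \<in> I \<Longrightarrow> j \<in> I \<Longrightarrow> i \<noteq> j \<Longrightarrow> cr (u i) (u j) \<noteq> 0" using less(4) by auto
    have eps_sq: "\<And>j. j \<in> J \<Longrightarrow> \<epsilon> j * \<epsilon> j = 1"
      unfolding \<epsilon>_def J_def using crnz pI by (auto intro!: sgn_sq)
    have pw: "\<And>j. j \<in> J \<Longrightarrow> cr (u p) (w j) > 0"
    proof -
      fix j assume "j \<in> J"
      hence "cr (u p) (u j) \<noteq> 0" using crnz pI unfolding J_def by auto
      thus "cr (u p) (w j) > 0" unfolding w_def cr_scl2 \<epsilon>_def
        by (simp add: sgn_if zero_less_mult_iff)
    qed
    have ww: "\<And>a b. cr (w a) (w b) = \<epsilon> a * \<epsilon> b * cr (u a) (u b)"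
      unfolding w_def cr_scl1 cr_scl2 by simp
    have wnz: "\<And>a b. a \<in> J \<Longrightarrow> b \<in> J \<Longrightarrow> a \<noteq> b \<Longrightarrow> cr (w a) (w b) \<noteq> 0"
    proof -
      fix a b assume ab: "a \<in> J" "b \<in> J" "a \<noteq> b"
      have "\<epsilon> a \<noteq> 0" "\<epsilon> b \<noteq> 0" using eps_sq[OF ab(1)] eps_sq[OF ab(2)] by auto
      moreover have "cr (u a) (u b) \<noteq> 0" using crnz ab unfolding J_def by auto
      ultimately show "cr (w a) (w b) \<noteq> 0" unfolding ww by simp
    qed
    define f where "f q = card {j\<in>J. cr (w q) (w j) > 0}" for q
    obtain q where qJ: "q \<in> J" and qmax: "\<forall>j\<in>J. f j \<le> f q"
    proof -
      have "Max (f ` J) \<in> f ` J" using finJ \<open>J \<noteq> {}\<close> by (intro Max_in) auto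
      then obtain q where "q \<in> J" "f q = Max (f ` J)" by auto
      moreover have "\<forall>j\<in>J. f j \<le> Max (f ` J)" using finJ by simp
      ultimately show ?thesis using that by auto
    qed
    have qw: "\<And>j. j \<in> J - {q} \<Longrightarrow> cr (w q) (w j) > 0"
    proof (rule ccontr)
      fix j assume jJ: "j \<in> J - {q}" and nn: "\<not> cr (w q) (w j) > 0"
      have "cr (w q) (w j) \<noteq> 0" using wnz jJ qJ by auto
      hence jq: "cr (w j) (w q) > 0" using nn cr_anti[of "w q" "w j"] by linarith
      have "{k\<in>J. cr (w q) (w k) > 0} \<subset> {k\<in>J. cr (w j) (w k) > 0}"
      proof
        show "{k\<in>J. cr (w q) (w k) > 0} \<subseteq> {k\<in>J. cr (w j) (w k) > 0}"
          using cr_trans[OF pw pw pw jq] jJ qJ by auto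
        show "{k\<in>J. cr (w q) (w k) > 0} \<noteq> {k\<in>J. cr (w j) (w k) > 0}"
        proof -
          have "q \<in> {k\<in>J. cr (w j) (w k) > 0}" using jq qJ by auto
          moreover have "q \<notin> {k\<in>J. cr (w q) (w k) > 0}" using cr_self[of "w q"] by auto
          ultimately show ?thesis by blast
        qed
      qed
      hence "f q < f j" unfolding f_def by (rule psubset_card_mono[rotated]) (use finJ in auto)
      thus False using qmax jJ by auto
    qed
    define I' where "I' = J - {q}"
    have I'sub: "I' \<subseteq> I" and pI': "p \<notin> I'" and qI': "q \<notin> I'" unfolding I'_def J_def by auto
    have qI: "q \<in> I" "q \<noteq> p" using qJ unfolding J_def by auto
    have IeqI: "I = insert p (insert q I')" using pI qI unfolding I'_def J_def by auto
    have finI': "finite I'" using finJ unfolding I'_def by auto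
    have cardI': "card I = card I' + 2" unfolding IeqI using finI' pI' qI' qI by simp
    have IH: "(\<Sum>i\<in>I'. \<Prod>j\<in>I'-{i}. sgn (cr (u i) (u j))) = 0"
      using less(1)[of I'] cardI' finI' less(3) less(4) I'sub by auto
    define E where "E = \<epsilon> q"
    have s_ip: "\<And>i. i \<in> I' \<Longrightarrow> sgn (cr (u i) (u p)) = - \<epsilon> i"
    proof -
      fix i assume "i \<in> I'"
      hence "i \<in> J" unfolding I'_def by auto
      hence "cr (u p) (u i) \<noteq> 0" using crnz pI unfolding J_def by auto
      thus "sgn (cr (u i) (u p)) = - \<epsilon> i" unfolding \<epsilon>_def using cr_anti[of "u i" "u p"]
        by (simp add: sgn_minus)
    qed
    have s_pi: "\<And>i. i \<in> I' \<Longrightarrow> sgn (cr (u p) (u i)) = \<epsilon> i" unfolding \<epsilon>_def by simp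
    have s_qi: "\<And>i. i \<in> I' \<Longrightarrow> sgn (cr (u q) (u i)) = E * \<epsilon> i"
    proof -
      fix i assume iI: "i \<in> I'"
      hence "i \<in> J" unfolding I'_def by auto
      have pos: "cr (w q) (w i) > 0" using qw iI unfolding I'_def by auto
      have "cr (u q) (u i) = \<epsilon> q * \<epsilon> i * cr (w q) (w i)"
      proof -
        have "\<epsilon> q * \<epsilon> i * cr (w q) (w i) = (\<epsilon> q * \<epsilon> q) * (\<epsilon> i * \<epsilon> i) * cr (u q) (u i)"
          unfolding ww by (simp add: algebra_simps)
        thus ?thesis using eps_sq[OF qJ] eps_sq[OF \<open>i \<in> J\<close>] by simp
      qed
      thus "sgn (cr (u q) (u i)) = E * \<epsilon> i" unfolding E_def using pos eps_sq[OF qJ] eps_sq[OF \<open>i \<in> J\<close>]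
        by (simp add: sgn_mult sgn_eps)
    qed
    have s_iq: "\<And>i. i \<in> I' \<Longrightarrow> sgn (cr (u i) (u q)) = - E * \<epsilon> i"
      by (subst cr_anti) (simp add: sgn_minus s_qi)
    have s_pq: "sgn (cr (u p) (u q)) = E" unfolding E_def \<epsilon>_def ..
    have s_qp: "sgn (cr (u q) (u p)) = - E" by (subst cr_anti) (simp add: sgn_minus s_pq)
    have epsI': "\<And>i. i \<in> I' \<Longrightarrow> \<epsilon> i * \<epsilon> i = 1" using eps_sq unfolding I'_def by auto
    have EE: "E * E = 1" unfolding E_def using eps_sq[OF qJ] .
    have tp: "(\<Prod>j\<in>I-{p}. sgn (cr (u p) (u j))) = E * (\<Prod>i\<in>I'. \<epsilon> i)"
    proof -
      have "I - {p} = insert q I'" using IeqI pI' qI' qI by auto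
      thus ?thesis using finI' qI' s_pq s_pi by (simp cong: prod.cong)
    qed
    have tq: "(\<Prod>j\<in>I-{q}. sgn (cr (u q) (u j))) = - E * (\<Prod>i\<in>I'. \<epsilon> i)"
    proof -
      have "I - {q} = insert p I'" using IeqI pI' qI' qI by auto
      hence "(\<Prod>j\<in>I-{q}. sgn (cr (u q) (u j))) = - E * (\<Prod>i\<in>I'. E * \<epsilon> i)"
        using finI' pI' s_qp s_qi by (simp cong: prod.cong)
      also have "(\<Prod>i\<in>I'. E * \<epsilon> i) = E ^ card I' * (\<Prod>i\<in>I'. \<epsilon> i)"
        by (simp add: prod.distrib)
      also have "E ^ card I' = 1"
      proof -
        have "even (card I')" using less(3) cardI' by simp
        then obtain k where "card I' = 2 * k" by auto
        thus ?thesis using EE by (simp add: power_mult power2_eq_square)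
      qed
      finally show ?thesis by simp
    qed
    have ti: "\<And>i. i \<in> I' \<Longrightarrow> (\<Prod>j\<in>I-{i}. sgn (cr (u i) (u j))) = E * (\<Prod>j\<in>I'-{i}. sgn (cr (u i) (u j)))"
    proof -
      fix i assume iI: "i \<in> I'"
      have "I - {i} = insert p (insert q (I' - {i}))" using IeqI pI' qI' qI iI by auto
      hence "(\<Prod>j\<in>I-{i}. sgn (cr (u i) (u j))) = (- \<epsilon> i) * ((- E * \<epsilon> i) * (\<Prod>j\<in>I'-{i}. sgn (cr (u i) (u j))))"
        using finI' pI' qI' qI s_ip[OF iI] s_iq[OF iI] by simp
      also have "\<dots> = E * (\<epsilon> i * \<epsilon> i) * (\<Prod>j\<in>I'-{i}. sgn (cr (u i) (u j)))" by (simp add: algebra_simps)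
      finally show "?thesis i" using epsI'[OF iI] by simp
    qed
    define F where "F i = (\<Prod>j\<in>I-{i}. sgn (cr (u i) (u j)))" for i
    have "(\<Sum>i\<in>I. \<Prod>j\<in>I-{i}. sgn (cr (u i) (u j))) = sum F I" unfolding F_def ..
    also have "sum F I = sum F (insert p (insert q I'))" using IeqI by (rule arg_cong)
    also have "\<dots> = F p + (F q + sum F I')" using finI' pI' qI' qI by simp
    also have "F p + (F q + sum F I') = 
        (\<Prod>j\<in>I-{p}. sgn (cr (u p) (u j))) + ((\<Prod>j\<in>I-{q}. sgn (cr (u q) (u j))) +
         (\<Sum>i\<in>I'. \<Prod>j\<in>I-{i}. sgn (cr (u i) (u j))))" unfolding F_def ..
    also have "(\<Sum>i\<in>I'. \<Prod>j\<in>I-{i}. sgn (cr (u i) (u j))) = E * (\<Sum>i\<in>I'. \<Prod>j\<in>I'-{i}. sgn (cr (u i) (u j)))"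
      by (simp add: ti sum_distrib_left)
    finally show ?thesis unfolding tp tq IH by simp
  qed
qed


lemma moc_swap:
  assumes "length L = n" "k < n" "l < n"
  shows "mat_of_cols n (L[k := L!l, l := L!k]) = swapcols k l (mat_of_cols n L)"
  by (rule eq_matI) (use assms in \<open>auto simp: mat_of_cols_def mat_swapcols_def nth_list_update\<close>)

lemma det_move:
  fixes xs :: "real vec list"
  assumes "length (xs @ z # ys @ zs) = n"
  shows "det (mat_of_cols n (xs @ z # ys @ zs)) = (-1)^length ys * det (mat_of_cols n (xs @ ys @ z # zs))"
  using assms
proof (induct ys arbitrary: xs)
  case Nil thus ?case by simp
next
  case (Cons y ys xs)
  let ?k = "length xs"
  let ?L = "xs @ z # y # ys @ zs"
  have len: "length ?L = n" using Cons(2) by simp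
  have k: "?k < n" "Suc ?k < n" using len by auto
  have swp: "?L[?k := ?L ! Suc ?k, Suc ?k := ?L ! ?k] = (xs @ [y]) @ z # ys @ zs"
    by (simp add: list_update_append nth_append)
  have "det (mat_of_cols n ((xs @ [y]) @ z # ys @ zs)) = - det (mat_of_cols n ?L)"
    unfolding swp[symmetric] moc_swap[OF len k(1) k(2)]
    by (rule det_swapcols) (use k mat_of_cols_carrier(1)[of n ?L] len in auto)
  moreover have "det (mat_of_cols n ((xs @ [y]) @ z # ys @ zs)) = (-1)^length ys * det (mat_of_cols n ((xs @ [y]) @ ys @ z # zs))"
    by (rule Cons(1)) (use len in simp)
  ultimately show ?case by simp
qed

lemma moc_replace:
  assumes "length L = n" "j < n" "c \<in> carrier_vec n"
  shows "mat_of_cols n (L[j := c]) = replace_col (mat_of_cols n L) c j"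
  by (rule eq_matI) (use assms in \<open>auto simp: mat_of_cols_def replace_col_def nth_list_update\<close>)

lemma det_replace_lin:
  assumes X: "X \<in> carrier_mat n n" and j: "j < n" and c: "c \<in> carrier_vec n"
  shows "det (replace_col X c j) = (\<Sum>r<n. c $ r * cofactor X r j)"
proof -
  have R: "replace_col X c j \<in> carrier_mat n n" using X by (auto simp: replace_col_def)
  show ?thesis
    unfolding laplace_expansion_column[OF R j]
  proof (rule sum.cong[OF refl])
    fix r assume r: "r \<in> {..<n}"
    have "mat_delete (replace_col X c j) r j = mat_delete X r j"
      by (rule eq_matI) (use X j in \<open>auto simp: mat_delete_def replace_col_def\<close>)
    thus "replace_col X c j $$ (r, j) * cofactor (replace_col X c j) r j = c $ r * cofactor X r j"
      using r X j by (simp add: cofactor_def replace_col_def)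
  qed
qed

lemma det_C1:
  fixes L :: "real vec list"
  assumes "length L = n" "set L \<subseteq> carrier_vec n" "a \<in> carrier_vec n" "k < n"
  shows "det (mat_of_cols n (L[k := mat_of_cols n L *\<^sub>v a])) = a $ k * det (mat_of_cols n L)"
proof -
  have M: "mat_of_cols n L \<in> carrier_mat n n" using assms(1) by auto
  show ?thesis
    by (subst moc_replace[OF assms(1,4)]) (use M assms in \<open>auto intro!: cramer_lemma_mat\<close>)
qed

lemma det_C2:
  fixes L :: "real vec list"
  assumes len: "length L = n" and Lc: "set L \<subseteq> carrier_vec n" and a: "a \<in> carrier_vec n"
    and b: "b \<in> carrier_vec n" and i: "i < n" and j: "j < n" and ij: "i \<noteq> j"
  shows "det (mat_of_cols n (L[i := mat_of_cols n L *\<^sub>v a, j := mat_of_cols n L *\<^sub>v b]))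
    = (a $ i * b $ j - a $ j * b $ i) * det (mat_of_cols n L)"
proof -
  define M where "M = mat_of_cols n L"
  have M: "M \<in> carrier_mat n n" using len unfolding M_def by auto
  have Ma: "M *\<^sub>v a \<in> carrier_vec n" using M a by auto
  define L' where "L' = L[i := M *\<^sub>v a]"
  have len': "length L' = n" unfolding L'_def using len by simp
  have L'c: "set L' \<subseteq> carrier_vec n" unfolding L'_def using Lc Ma
    by (metis set_update_subset_insert insert_subset subset_trans)
  define X where "X = mat_of_cols n L'"
  have X: "X \<in> carrier_mat n n" unfolding X_def using len' by auto
  define \<phi> where "\<phi> c = (\<Sum>r<n. c $ r * cofactor X r j)" for c
  have phi: "\<And>c. c \<in> carrier_vec n \<Longrightarrow> det (mat_of_cols n (L'[j := c])) = \<phi> c"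
    unfolding \<phi>_def X_def by (subst moc_replace[OF len' j]) (auto intro!: det_replace_lin[OF _ j] simp: len')
  have Lk: "\<And>k. k < n \<Longrightarrow> L ! k \<in> carrier_vec n" using Lc len by auto
  have Mb: "\<And>r. r < n \<Longrightarrow> (M *\<^sub>v b) $ r = (\<Sum>k<n. L ! k $ r * b $ k)"
    using M b unfolding M_def by (auto simp: scalar_prod_def mat_of_cols_def lessThan_atLeast0 intro!: sum.cong)
  have lin: "\<phi> (M *\<^sub>v b) = (\<Sum>k<n. b $ k * \<phi> (L ! k))"
  proof -
    have "\<phi> (M *\<^sub>v b) = (\<Sum>r<n. (\<Sum>k<n. L ! k $ r * b $ k) * cofactor X r j)"
      unfolding \<phi>_def by (rule sum.cong) (auto simp: Mb)
    also have "\<dots> = (\<Sum>r<n. \<Sum>k<n. b $ k * (L ! k $ r * cofactor X r j))"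
      by (rule sum.cong[OF refl]) (simp add: sum_distrib_left mult_ac)
    also have "\<dots> = (\<Sum>k<n. \<Sum>r<n. b $ k * (L ! k $ r * cofactor X r j))"
      by (rule sum.swap)
    also have "\<dots> = (\<Sum>k<n. b $ k * \<phi> (L ! k))"
      unfolding \<phi>_def by (simp add: sum_distrib_left)
    finally show ?thesis .
  qed
  have v0: "\<And>k. k < n \<Longrightarrow> k \<noteq> i \<Longrightarrow> k \<noteq> j \<Longrightarrow> \<phi> (L ! k) = 0"
  proof -
    fix k assume k: "k < n" "k \<noteq> i" "k \<noteq> j"
    let ?L2 = "L'[j := L ! k]"
    have len2: "length ?L2 = n" using len' by simp
    have L2c: "set ?L2 \<subseteq> carrier_vec n" using L'c Lk[OF k(1)]
      by (metis set_update_subset_insert insert_subset subset_trans)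
    have "?L2 ! k = L ! k" "?L2 ! j = L ! k" using k j len unfolding L'_def by auto
    moreover have "col (mat_of_cols n ?L2) k = ?L2 ! k"
      by (rule col_mat_of_cols) (use k len2 L2c L'c len' nth_mem in auto)
    moreover have "col (mat_of_cols n ?L2) j = ?L2 ! j"
      by (rule col_mat_of_cols) (use j k len2 L2c L'c len' Lk nth_mem in auto)
    ultimately have "col (mat_of_cols n ?L2) k = col (mat_of_cols n ?L2) j" by simp
    hence "det (mat_of_cols n ?L2) = 0"
      by (intro det_identical_columns[of _ n k j]) (use k j len2 in auto)
    thus "\<phi> (L ! k) = 0" using phi[OF Lk[OF k(1)]] by simp
  qed
  have vj: "\<phi> (L ! j) = a $ i * det M"
  proof -
    have "L'[j := L ! j] = L[i := M *\<^sub>v a]" unfolding L'_def using ij by (metis list_update_id nth_list_update_neq)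
    hence "\<phi> (L ! j) = det (mat_of_cols n (L[i := M *\<^sub>v a]))" using phi[OF Lk[OF j]] by simp
    thus ?thesis unfolding M_def using det_C1[OF len Lc a i] by simp
  qed
  have vi: "\<phi> (L ! i) = - (a $ j * det M)"
  proof -
    let ?L2 = "L'[j := L ! i]"
    have len2: "length ?L2 = n" using len' by simp
    have sw: "?L2[i := ?L2 ! j, j := ?L2 ! i] = L[j := M *\<^sub>v a]"
      unfolding L'_def using ij i j len by (auto simp: list_update_swap nth_list_update intro!: nth_equalityI)
    have "det (mat_of_cols n (L[j := M *\<^sub>v a])) = - det (mat_of_cols n ?L2)"
      unfolding sw[symmetric] moc_swap[OF len2 i j] by (rule det_swapcols) (use i j ij len2 in auto)
    moreover have "det (mat_of_cols n (L[j := M *\<^sub>v a])) = a $ j * det M"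
      unfolding M_def using det_C1[OF len Lc a j] by simp
    ultimately show ?thesis using phi[OF Lk[OF i]] by simp
  qed
  have "det (mat_of_cols n (L[i := M *\<^sub>v a, j := M *\<^sub>v b])) = \<phi> (M *\<^sub>v b)"
    using phi[of "M *\<^sub>v b"] M b unfolding L'_def by auto
  also have "\<dots> = (\<Sum>k<n. (if k = j then b $ j * (a $ i * det M) else 0) +
                         (if k = i then b $ i * (- (a $ j * det M)) else 0))"
    unfolding lin by (rule sum.cong) (use v0 vi vj ij in auto)
  also have "\<dots> = b $ j * (a $ i * det M) + b $ i * (- (a $ j * det M))"
    using i j by (simp add: sum.distrib)
  finally show ?thesis unfolding M_def by (simp add: algebra_simps)
qed

lemma span_det_nz:
  fixes W :: "real vec list"
  assumes len: "length W = n" and Wc: "set W \<subseteq> carrier_vec n"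
    and sp: "LinearCombinations.module.span class_ring (module_vec TYPE(real) n) (set W) = carrier_vec n"
  shows "det (mat_of_cols n W) \<noteq> 0"
proof
  interpret vec_space "TYPE(real)" n .
  assume d0: "det (mat_of_cols n W) = 0"
  define M where "M = mat_of_cols n W"
  have M: "M \<in> carrier_mat n n" unfolding M_def using len by auto
  have "det (transpose_mat M) = 0" using d0 det_transpose[OF M] unfolding M_def by simp
  then obtain w where w: "w \<in> carrier_vec n" "w \<noteq> 0\<^sub>v n" "transpose_mat M *\<^sub>v w = 0\<^sub>v n"
    using det_0_iff_vec_prod_zero[of "transpose_mat M" n] M by auto
  have orth: "\<forall>y\<in>set W. w \<bullet> y = 0"
  proof
    fix y assume "y \<in> set W"
    then obtain c where c: "c < n" "y = W ! c" using len by (auto simp: in_set_conv_nth)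
    have yc: "y \<in> carrier_vec n" using Wc \<open>y \<in> set W\<close> by auto
    have "(transpose_mat M *\<^sub>v w) $ c = 0" using w(3) c by simp
    moreover have "(transpose_mat M *\<^sub>v w) $ c = col M c \<bullet> w" using c M by simp
    moreover have "col M c = y" unfolding M_def c(2) by (rule col_mat_of_cols) (use c len yc in auto)
    ultimately show "w \<bullet> y = 0" using comm_scalar_prod[OF w(1) yc] by simp
  qed
  hence "w \<in> orthogonal_complement (set W)" unfolding orthogonal_complement_def using w(1) by auto
  hence "w \<in> orthogonal_complement (carrier_vec n)"
    using in_orthogonal_complement_span[OF Wc] sp by simp
  hence "\<And>k. k < n \<Longrightarrow> w $ k = 0"
  proof -
    fix k assume k: "k < n"
    have "w \<bullet> unit_vec n k = 0" using \<open>w \<in> orthogonal_complement (carrier_vec n)\<close>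
      unfolding orthogonal_complement_def by auto
    thus "w $ k = 0" using scalar_prod_right_unit[OF k, of w] by simp
  qed
  hence "w = 0\<^sub>v n" using w(1) by (intro eq_vecI) auto
  thus False using w(2) by simp
qed

lemma length_omit[simp]: "i < length xs \<Longrightarrow> length (omit i xs) = length xs - 1"
  unfolding omit_def by simp

lemma omit_nth: "i < length xs \<Longrightarrow> k < length xs - 1 \<Longrightarrow> omit i xs ! k = xs ! (if k < i then k else Suc k)"
  unfolding omit_def by (auto simp: nth_append min_def)

lemma omit_omit:
  assumes "i \<le> k" "Suc k < length xs"
  shows "omit k (omit i xs) = omit i (omit (Suc k) xs)"
  by (rule nth_equalityI) (use assms in \<open>auto simp: omit_nth\<close>)

lemma omit2_app:
  fixes L :: "'a list"
  assumes len: "length L = n"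
  shows "omit n (omit (Suc n) (L @ [x, y])) = L"
    "i < n \<Longrightarrow> omit i (omit n (L @ [x, y])) = take i L @ drop (Suc i) L @ [y]"
    "i < n \<Longrightarrow> omit i (omit (Suc n) (L @ [x, y])) = take i L @ drop (Suc i) L @ [x]"
    "i < j \<Longrightarrow> j < n \<Longrightarrow> omit i (omit j (L @ [x, y])) =
       take i L @ take (j - Suc i) (drop (Suc i) L) @ drop (Suc j) L @ [x, y]"
  using len by (auto simp: omit_def take_append drop_append upd_conv_take_nth_drop min_def
     take_drop Suc_diff_Suc)

lemma upd2_conv:
  assumes "i < j" "j < length L"
  shows "L[i := x, j := y] = take i L @ x # take (j - Suc i) (drop (Suc i) L) @ y # drop (Suc j) L"
  by (rule nth_equalityI) (use assms in \<open>auto simp: nth_append nth_list_update min_def\<close>)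

definition uu :: "nat \<Rightarrow> real vec \<Rightarrow> real vec \<Rightarrow> nat \<Rightarrow> real \<times> real" where
  "uu n a b k = (if k < n then ((-1)^k * a $ k, (-1)^k * b $ k) else if k = n then (-1, 0) else (0, 1))"

lemma pow_sq: "((-1::real)^k) * (-1)^k = 1"
  by (simp add: power_add[symmetric])

lemma pow_n1: assumes "even n" "i < n" shows "(-1::real)^(n - 1 - i) = - ((-1)^i)"
proof -
  have "(-1::real)^(n - 1 - i) * (-1)^i = (-1)^(n - 1)"
    using assms by (simp add: power_add[symmetric])
  also have "\<dots> = -1" using assms by (simp add: neg_one_odd_power)
  finally have "(-1::real)^(n - 1 - i) * (-1)^i = -1" .
  hence "(-1::real)^(n - 1 - i) * ((-1)^i * (-1)^i) = - ((-1)^i)" by (metis mult.assoc mult_minus1)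
  thus ?thesis using pow_sq by simp
qed

lemma pow_ij: assumes "i < j" shows "(-1::real)^(j - Suc i) = - ((-1)^(i+j))"
proof -
  have e: "j - Suc i + Suc (2*i) = i + j" using assms by arith
  have "(-1::real)^(j - Suc i) * (-1)^(Suc (2*i)) = (-1)^(i+j)"
    by (simp only: power_add[symmetric] e)
  moreover have "(-1::real)^(Suc (2*i)) = -1" by simp
  ultimately have "- ((-1::real)^(j - Suc i)) = (-1)^(i+j)" by simp
  thus ?thesis by simp
qed

lemma flip: "(A::real) = s * D \<Longrightarrow> s * s = 1 \<Longrightarrow> D = s * A"
  by (metis mult.assoc mult_1)

lemma Dformula:
  fixes vs :: "real vec list"
  assumes ev: "even n" and len: "length vs = n + 2" and vc: "set vs \<subseteq> carrier_vec n"
    and a: "a \<in> carrier_vec n" and b: "b \<in> carrier_vec n"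
    and xa: "mat_of_cols n (take n vs) *\<^sub>v a = vs ! n"
    and yb: "mat_of_cols n (take n vs) *\<^sub>v b = vs ! Suc n"
    and ij: "i < j" "j \<le> Suc n"
  shows "det (mat_of_cols n (omit i (omit j vs)))
     = - det (mat_of_cols n (take n vs)) * cr (uu n a b i) (uu n a b j)"
proof -
  define L where "L = take n vs"
  define x where "x = vs ! n"
  define y where "y = vs ! Suc n"
  have vsL: "vs = L @ [x, y]" unfolding L_def x_def y_def
    by (rule nth_equalityI) (use len in \<open>auto simp: nth_append less_Suc_eq\<close>)
  have lenL: "length L = n" unfolding L_def using len by simp
  have Lc: "set L \<subseteq> carrier_vec n" unfolding L_def using vc by (meson set_take_subset subset_trans)
  define M where "M = mat_of_cols n L"
  define dA where "dA = det M"
  have xa': "x = M *\<^sub>v a" and yb': "y = M *\<^sub>v b" using xa yb unfolding M_def L_def x_def y_def by auto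
  have uun: "uu n a b n = (-1, 0)" "uu n a b (Suc n) = (0, 1)" unfolding uu_def by auto
  have uui: "\<And>k. k < n \<Longrightarrow> uu n a b k = ((-1)^k * a $ k, (-1)^k * b $ k)" unfolding uu_def by auto
  consider (c1) "i = n" "j = Suc n" | (c2) "i < n" "j = Suc n" | (c3) "i < n" "j = n" | (c4) "j < n"
    using ij by linarith
  thus ?thesis
  proof cases
    case c1
    have e: "omit i (omit j vs) = L" using omit2_app(1)[OF lenL] vsL c1 by simp
    show ?thesis unfolding e unfolding c1 unfolding L_def[symmetric] M_def[symmetric] uun
      by (simp add: cr_def)
  next
    case c2
    have mv: "det (mat_of_cols n (take i L @ x # drop (Suc i) L @ [])) =
       (-1)^length (drop (Suc i) L) * det (mat_of_cols n (take i L @ drop (Suc i) L @ x # []))"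
      by (rule det_move) (use lenL c2 in auto)
    have "take i L @ x # drop (Suc i) L @ [] = L[i := M *\<^sub>v a]"
      using lenL c2 by (simp add: upd_conv_take_nth_drop xa')
    hence "a $ i * dA = - ((-1)^i) * det (mat_of_cols n (take i L @ drop (Suc i) L @ [x]))"
      using mv det_C1[OF lenL Lc a c2(1)] pow_n1[OF ev c2(1)] lenL unfolding M_def dA_def by simp
    hence "det (mat_of_cols n (take i L @ drop (Suc i) L @ [x])) = - ((-1)^i) * (a $ i * dA)"
      by (rule flip) (simp add: pow_sq)
    moreover have e: "omit i (omit j vs) = take i L @ drop (Suc i) L @ [x]"
      using omit2_app(3)[OF lenL c2(1)] vsL c2 by simp
    ultimately show ?thesis unfolding e unfolding c2(2) unfolding L_def[symmetric] M_def[symmetric]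
        dA_def[symmetric] uun uui[OF c2(1)] by (simp add: cr_def)
  next
    case c3
    have mv: "det (mat_of_cols n (take i L @ y # drop (Suc i) L @ [])) =
       (-1)^length (drop (Suc i) L) * det (mat_of_cols n (take i L @ drop (Suc i) L @ y # []))"
      by (rule det_move) (use lenL c3 in auto)
    have "take i L @ y # drop (Suc i) L @ [] = L[i := M *\<^sub>v b]"
      using lenL c3 by (simp add: upd_conv_take_nth_drop yb')
    hence "b $ i * dA = - ((-1)^i) * det (mat_of_cols n (take i L @ drop (Suc i) L @ [y]))"
      using mv det_C1[OF lenL Lc b c3(1)] pow_n1[OF ev c3(1)] lenL unfolding M_def dA_def by simp
    hence "det (mat_of_cols n (take i L @ drop (Suc i) L @ [y])) = - ((-1)^i) * (b $ i * dA)"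
      by (rule flip) (simp add: pow_sq)
    moreover have e: "omit i (omit j vs) = take i L @ drop (Suc i) L @ [y]"
      using omit2_app(2)[OF lenL c3(1)] vsL c3 by simp
    ultimately show ?thesis unfolding e unfolding c3(2) unfolding L_def[symmetric] M_def[symmetric]
        dA_def[symmetric] uun uui[OF c3(1)] by (simp add: cr_def)
  next
    case c4
    define mid where "mid = take (j - Suc i) (drop (Suc i) L)"
    define rest where "rest = drop (Suc j) L"
    have lm: "length mid = j - Suc i" unfolding mid_def using lenL c4 ij by simp
    have lr: "length rest = n - Suc j" unfolding rest_def using lenL by simp
    have ln: "length (take i L) = i" using lenL c4 ij by simp
    have st1: "det (mat_of_cols n ((take i L @ x # mid) @ y # rest @ [])) =
       (-1)^length rest * det (mat_of_cols n ((take i L @ x # mid) @ rest @ y # []))"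
      by (rule det_move) (use lenL c4 ij lm lr ln in auto)
    have st2: "det (mat_of_cols n (take i L @ x # (mid @ rest) @ [y])) =
       (-1)^length (mid @ rest) * det (mat_of_cols n (take i L @ (mid @ rest) @ x # [y]))"
      by (rule det_move) (use lenL c4 ij lm lr ln in auto)
    have C2: "det (mat_of_cols n (L[i := x, j := y])) = (a $ i * b $ j - a $ j * b $ i) * dA"
      unfolding xa' yb' M_def dA_def by (rule det_C2[OF lenL Lc a b]) (use c4 ij in auto)
    have "L[i := x, j := y] = (take i L @ x # mid) @ y # rest @ []"
      unfolding mid_def rest_def using upd2_conv[OF ij(1), of L x y] c4 lenL by simp
    hence "(a $ i * b $ j - a $ j * b $ i) * dA =
        (-1)^length rest * ((-1)^length (mid @ rest) * det (mat_of_cols n (take i L @ mid @ rest @ [x, y])))"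
      using C2 st1 st2 by simp
    also have "\<dots> = ((-1)^length rest * (-1)^length rest) * (-1)^(j - Suc i) *
         det (mat_of_cols n (take i L @ mid @ rest @ [x, y]))"
      using lm by (simp add: power_add algebra_simps)
    also have "\<dots> = - ((-1)^(i+j)) * det (mat_of_cols n (take i L @ mid @ rest @ [x, y]))"
      using pow_sq pow_ij[OF ij(1)] by simp
    finally have "det (mat_of_cols n (take i L @ mid @ rest @ [x, y])) =
        - ((-1)^(i+j)) * ((a $ i * b $ j - a $ j * b $ i) * dA)"
      by (rule flip) (simp add: pow_sq)
    moreover have e: "omit i (omit j vs) = take i L @ mid @ rest @ [x, y]"
      using omit2_app(4)[OF lenL ij(1) c4] vsL unfolding mid_def rest_def by simp
    ultimately show ?thesis unfolding e unfolding L_def[symmetric] M_def[symmetric]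
        dA_def[symmetric] uui[OF c4] uui[OF less_trans[OF ij(1) c4]] mid_def[symmetric] rest_def[symmetric]
      by (simp add: cr_def power_add algebra_simps)
  qed
qed

lemma solve_vec:
  fixes M :: "real mat"
  assumes M: "M \<in> carrier_mat n n" and d: "det M \<noteq> 0" and x: "x \<in> carrier_vec n"
  shows "\<exists>a \<in> carrier_vec n. M *\<^sub>v a = x"
proof -
  define A where "A = adj_mat M"
  have A: "A \<in> carrier_mat n n" "M * A = det M \<cdot>\<^sub>m 1\<^sub>m n" using adj_mat[OF M] unfolding A_def by auto
  define a where "a = (1 / det M) \<cdot>\<^sub>v (A *\<^sub>v x)"
  have ac: "a \<in> carrier_vec n" unfolding a_def using A x by auto
  have "M *\<^sub>v a = (1 / det M) \<cdot>\<^sub>v (M *\<^sub>v (A *\<^sub>v x))"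
    unfolding a_def by (rule mult_mat_vec[OF M]) (use A x in auto)
  also have "M *\<^sub>v (A *\<^sub>v x) = (M * A) *\<^sub>v x" using assoc_mult_mat_vec[OF M A(1) x] by simp
  also have "(M * A) *\<^sub>v x = det M \<cdot>\<^sub>v x" unfolding A(2)
  proof (rule eq_vecI)
    fix i assume i: "i < dim_vec (det M \<cdot>\<^sub>v x)"
    hence "i < n" using x by simp
    have "(\<Sum>ia = 0..<n. det M * (if ia = i then 1 else 0) * x $ ia) = (\<Sum>ia = 0..<n. if ia = i then det M * x $ ia else 0)"
      by (rule sum.cong) auto
    thus "(det M \<cdot>\<^sub>m 1\<^sub>m n *\<^sub>v x) $ i = (det M \<cdot>\<^sub>v x) $ i" using \<open>i < n\<close> x
      by (simp add: scalar_prod_def)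
  qed (use x in simp)
  also have "(1 / det M) \<cdot>\<^sub>v (det M \<cdot>\<^sub>v x) = x" using d by (simp add: smult_smult_assoc)
  finally show ?thesis using ac by auto
qed

lemma set_omit2:
  assumes ij: "i < j" "j < length xs"
  shows "set (omit i (omit j xs)) = (\<lambda>k. xs ! k) ` ({..<length xs} - {i, j})"
proof -
  have l1: "length (omit j xs) = length xs - 1" using ij by simp
  have l2: "length (omit i (omit j xs)) = length xs - 2" using ij l1 by simp
  have nth2: "\<And>k. k < length xs - 2 \<Longrightarrow> omit i (omit j xs) ! k =
      xs ! (if k < i then k else if Suc k < j then Suc k else Suc (Suc k))"
    using ij l1 by (auto simp: omit_nth)
  show ?thesis
  proof
    show "set (omit i (omit j xs)) \<subseteq> (\<lambda>k. xs ! k) ` ({..<length xs} - {i, j})"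
    proof
      fix z assume "z \<in> set (omit i (omit j xs))"
      then obtain k where k: "k < length xs - 2" "z = omit i (omit j xs) ! k"
        using l2 by (auto simp: in_set_conv_nth)
      show "z \<in> (\<lambda>k. xs ! k) ` ({..<length xs} - {i, j})"
        unfolding k(2) nth2[OF k(1)] by (rule imageI) (use k(1) ij in auto)
    qed
    show "(\<lambda>k. xs ! k) ` ({..<length xs} - {i, j}) \<subseteq> set (omit i (omit j xs))"
    proof
      fix z assume "z \<in> (\<lambda>k. xs ! k) ` ({..<length xs} - {i, j})"
      then obtain m where m: "m < length xs" "m \<noteq> i" "m \<noteq> j" "z = xs ! m" by auto
      define k where "k = (if m < i then m else if m < j then m - 1 else m - 2)"
      have k: "k < length xs - 2" unfolding k_def using m ij by auto
      have m2: "\<not> m < j \<Longrightarrow> Suc (Suc (m - 2)) = m" using m ij by arith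
      have "omit i (omit j xs) ! k = z" using nth2[OF k] m ij m2 by (auto simp: k_def)
      thus "z \<in> set (omit i (omit j xs))" using k l2 by (metis nth_mem)
    qed
  qed
qed

lemma omit_subset: "set (omit i xs) \<subseteq> set xs"
  unfolding omit_def by (auto dest: in_set_takeD in_set_dropD)

theorem proposition3p5:
  fixes n :: nat and vs :: "real vec list"
  assumes "even n"
    and "length vs = n + 2"
    and "set vs \<subseteq> carrier_vec n"
    and "hereditarily_spanning n vs"
  shows "dP n vs = 0"
proof -
  note ev = assms(1) and len = assms(2) and vc = assms(3)
  have hs: "\<And>S. S \<subseteq> {..<length vs} \<Longrightarrow> card S = n \<Longrightarrow>
     LinearCombinations.module.span class_ring (module_vec TYPE(real) n) ((\<lambda>i. vs ! i) ` S) = carrier_vec n"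
    using assms(4) unfolding hereditarily_spanning_def by auto
  have nz: "\<And>i j. i < j \<Longrightarrow> j \<le> Suc n \<Longrightarrow> det (mat_of_cols n (omit i (omit j vs))) \<noteq> 0"
  proof -
    fix i j assume ij: "i < j" "j \<le> Suc n"
    let ?W = "omit i (omit j vs)"
    have lW: "length ?W = n" using ij len by simp
    have Wc: "set ?W \<subseteq> carrier_vec n" using omit_subset[of i "omit j vs"] omit_subset[of j vs] vc by blast
    have cS: "card ({..<length vs} - {i, j}) = n" using ij len by (simp add: card_Diff_subset)
    show "det (mat_of_cols n ?W) \<noteq> 0"
      by (rule span_det_nz[OF lW Wc]) (use hs[OF _ cS] set_omit2[of i j vs] ij len in auto)
  qed
  define L where "L = take n vs"
  define M where "M = mat_of_cols n L"
  define dA where "dA = det M"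
  have e1: "omit n (omit (Suc n) vs) = L" unfolding L_def omit_def using len by (simp add: min_def)
  have M: "M \<in> carrier_mat n n" unfolding M_def L_def using len by auto
  have dA: "dA \<noteq> 0" using nz[of n "Suc n"] e1 unfolding dA_def M_def by simp
  have xc: "vs ! n \<in> carrier_vec n" "vs ! Suc n \<in> carrier_vec n" using vc len by auto
  obtain a where a: "a \<in> carrier_vec n" "M *\<^sub>v a = vs ! n"
    using solve_vec[OF M _ xc(1)] dA unfolding dA_def by auto
  obtain b where b: "b \<in> carrier_vec n" "M *\<^sub>v b = vs ! Suc n"
    using solve_vec[OF M _ xc(2)] dA unfolding dA_def by auto
  define u where "u = uu n a b"
  have DF: "\<And>i j. i < j \<Longrightarrow> j \<le> Suc n \<Longrightarrow> det (mat_of_cols n (omit i (omit j vs))) = - dA * cr (u i) (u j)"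
    unfolding u_def dA_def M_def L_def
    by (rule Dformula[OF ev len vc a(1) b(1)]) (use a b in \<open>auto simp: M_def L_def\<close>)
  have crnz: "\<And>i j. i < j \<Longrightarrow> j \<le> Suc n \<Longrightarrow> cr (u i) (u j) \<noteq> 0"
    using DF nz by fastforce
  define I where "I = {0..Suc n}"
  have crI: "\<forall>i\<in>I. \<forall>j\<in>I. i \<noteq> j \<longrightarrow> cr (u i) (u j) \<noteq> 0"
  proof (intro ballI impI)
    fix i j assume "i \<in> I" "j \<in> I" "i \<noteq> j"
    thus "cr (u i) (u j) \<noteq> 0" unfolding I_def using crnz[of i j] crnz[of j i] cr_anti[of "u i" "u j"]
      by (cases "i < j") auto
  qed
  define Or2 where "Or2 i j = Or n (omit (min i j) (omit (max i j) vs))" for i j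
  have Or2v: "\<And>i j. i \<in> I \<Longrightarrow> j \<in> I \<Longrightarrow> i \<noteq> j \<Longrightarrow>
      Or2 i j = - sgn dA * ((if j < i then -1 else 1) * sgn (cr (u i) (u j)))"
  proof -
    fix i j assume ij: "i \<in> I" "j \<in> I" "i \<noteq> j"
    show "?thesis i j"
    proof (cases "i < j")
      case True
      thus ?thesis unfolding Or2_def Or_def using DF[of i j] ij unfolding I_def
        by (simp add: sgn_mult)
    next
      case False
      hence "j < i" using ij by simp
      thus ?thesis unfolding Or2_def Or_def using DF[of j i] ij cr_anti[of "u j" "u i"] unfolding I_def
        by (simp add: sgn_mult sgn_minus)
    qed
  qed
  have Pi: "\<And>i. i \<in> I \<Longrightarrow> P n (omit i vs) = (\<Prod>j\<in>I-{i}. Or2 i j)"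
  proof -
    fix i assume iI: "i \<in> I"
    define h where "h k = (if k < i then k else Suc k)" for k
    have bij: "bij_betw h {0..n} (I - {i})"
    proof (rule bij_betw_imageI)
      show "inj_on h {0..n}" unfolding inj_on_def h_def by auto
      show "h ` {0..n} = I - {i}"
      proof
        show "h ` {0..n} \<subseteq> I - {i}" unfolding h_def I_def by auto
        show "I - {i} \<subseteq> h ` {0..n}"
        proof
          fix m assume m: "m \<in> I - {i}"
          show "m \<in> h ` {0..n}"
          proof (cases "m < i")
            case True thus ?thesis using m iI unfolding h_def I_def by (auto intro!: image_eqI[of _ _ m])
          next
            case False
            hence "m = h (m - 1)" "m - 1 \<in> {0..n}" using m iI unfolding h_def I_def by auto
            thus ?thesis by blast
          qed
        qed
      qed
    qed
    have "P n (omit i vs) = (\<Prod>k\<in>{0..n}. Or2 i (h k))"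
      unfolding P_def
    proof (rule prod.cong[OF refl])
      fix k assume k: "k \<in> {0..n}"
      show "Or n (omit k (omit i vs)) = Or2 i (h k)"
      proof (cases "k < i")
        case True thus ?thesis unfolding Or2_def h_def by simp
      next
        case False
        hence "omit k (omit i vs) = omit i (omit (Suc k) vs)"
          using k len by (intro omit_omit) auto
        thus ?thesis unfolding Or2_def h_def using False by simp
      qed
    qed
    also have "\<dots> = (\<Prod>j\<in>I-{i}. Or2 i j)" by (rule prod.reindex_bij_betw[OF bij])
    finally show "P n (omit i vs) = (\<Prod>j\<in>I-{i}. Or2 i j)" .
  qed
  define c where "c = (- sgn dA) ^ Suc n"
  have trm: "\<And>i. i \<in> I \<Longrightarrow> (-1)^i * P n (omit i vs) = c * (\<Prod>j\<in>I-{i}. sgn (cr (u i) (u j)))"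
  proof -
    fix i assume iI: "i \<in> I"
    have fin: "finite (I - {i})" unfolding I_def by simp
    have cardI: "card (I - {i}) = Suc n" using iI unfolding I_def by simp
    have "P n (omit i vs) = (\<Prod>j\<in>I-{i}. - sgn dA * ((if j < i then -1 else 1) * sgn (cr (u i) (u j))))"
      unfolding Pi[OF iI] by (rule prod.cong) (use Or2v iI in auto)
    also have "\<dots> = c * ((\<Prod>j\<in>I-{i}. (if j < i then -1 else 1::real)) * (\<Prod>j\<in>I-{i}. sgn (cr (u i) (u j))))"
      unfolding prod.distrib c_def using cardI by simp
    also have "(\<Prod>j\<in>I-{i}. (if j < i then -1 else 1::real)) = (-1)^i"
    proof -
      have "(\<Prod>j\<in>I-{i}. (if j < i then -1 else 1::real)) = (\<Prod>j\<in>(I-{i}) \<inter> {j. j < i}. -1)"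
        by (subst prod.If_cases[OF fin]) simp
      also have "(I-{i}) \<inter> {j. j < i} = {0..<i}" using iI unfolding I_def by auto
      finally show ?thesis by simp
    qed
    finally show "(-1)^i * P n (omit i vs) = c * (\<Prod>j\<in>I-{i}. sgn (cr (u i) (u j)))"
      using pow_sq[of i] by (simp add: algebra_simps)
  qed
  have "dP n vs = (\<Sum>i\<in>I. (-1)^i * P n (omit i vs))" unfolding dP_def I_def by simp
  also have "\<dots> = (\<Sum>i\<in>I. c * (\<Prod>j\<in>I-{i}. sgn (cr (u i) (u j))))" by (rule sum.cong) (use trm in auto)
  also have "\<dots> = c * (\<Sum>i\<in>I. \<Prod>j\<in>I-{i}. sgn (cr (u i) (u j)))" by (simp add: sum_distrib_left)
  also have "(\<Sum>i\<in>I. \<Prod>j\<in>I-{i}. sgn (cr (u i) (u j))) = 0"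
    by (rule comb) (use crI ev in \<open>auto simp: I_def\<close>)
  finally show ?thesis by simp
qed

end
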